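(* Let $X$ be the dihedral quandle $R_n$. (1) If $n$ is odd, the identity map is the only good involution of $X$. (2) If $n=2m$ with $m$ odd, a good involution of $X$ is either the identity map or the antipodal map. (3) If $n=2m$ with $m$ even, there are exactly four good involutions: the identity map, the antipodal map and the two half-antipodal maps.
   Context: A quandle is a set $X$ with a binary operation $(x,y)\mapsto x^y$ such that $x^x=x$; for all $x,y$ there is a unique $z$ with $z^y=x$ (written $x^{y^{-1}}$); and $(x^y)^z=(x^z)^{(y^z)}$. A good involution of $X$ is a map $\rho:X\to X$ with $\rho\circ\rho={\rm id}$, $\rho(x^y)=\rho(x)^y$ and $x^{\rho(y)}=x^{y^{-1}}$ for all $x,y$. The dihedral quandle $R_n$ is $\mathbb{Z}/n\mathbb{Z}$ with $x^y=2y-x \pmod n$. For $n=2m$, the antipodal map is $i\mapsto i+m$. For $n=2m$ with $m$ even, the half-antipodal maps are $\rho_1$ with $\rho_1(i)=i$ for odd $i$ and $\rho_1(i)=i+m$ for even $i$, and $\rho_2$ with $\rho_2(i)=i+m$ for odd $i$ and $\rho_2(i)=i$ for even $i$ (parity is well defined since $n$ is even). *)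

theory Defs
  imports Main
begin

definition quandle :: "'a set \<Rightarrow> ('a \<Rightarrow> 'a \<Rightarrow> 'a) \<Rightarrow> bool" where
  "quandle X op \<longleftrightarrow>
     (\<forall>x\<in>X. \<forall>y\<in>X. op x y \<in> X) \<and>
     (\<forall>x\<in>X. op x x = x) \<and>
     (\<forall>x\<in>X. \<forall>y\<in>X. \<exists>!z. z \<in> X \<and> op z y = x) \<and>
     (\<forall>x\<in>X. \<forall>y\<in>X. \<forall>z\<in>X. op (op x y) z = op (op x z) (op y z))"

definition qinv :: "'a set \<Rightarrow> ('a \<Rightarrow> 'a \<Rightarrow> 'a) \<Rightarrow> 'a \<Rightarrow> 'a \<Rightarrow> 'a" where
  "qinv X op x y = (THE z. z \<in> X \<and> op z y = x)"

definition good_involution :: "'a set \<Rightarrow> ('a \<Rightarrow> 'a \<Rightarrow> 'a) \<Rightarrow> ('a \<Rightarrow> 'a) \<Rightarrow> bool" where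
  "good_involution X op \<rho> \<longleftrightarrow>
     (\<forall>x\<in>X. \<rho> x \<in> X) \<and>
     (\<forall>x\<in>X. \<rho> (\<rho> x) = x) \<and>
     (\<forall>x\<in>X. \<forall>y\<in>X. \<rho> (op x y) = op (\<rho> x) y) \<and>
     (\<forall>x\<in>X. \<forall>y\<in>X. op x (\<rho> y) = qinv X op x y)"

text \<open>Dihedral quandle R_n: carrier {0..<n} representing Z/nZ, x^y = 2y - x mod n.\<close>
definition dihedral_carrier :: "nat \<Rightarrow> int set" where
  "dihedral_carrier n = {0..<int n}"

definition dihedral_op :: "nat \<Rightarrow> int \<Rightarrow> int \<Rightarrow> int" where
  "dihedral_op n x y = (2 * y - x) mod int n"

definition antipodal :: "nat \<Rightarrow> int \<Rightarrow> int" where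
  "antipodal n i = (i + int n div 2) mod int n"

definition half_antipodal1 :: "nat \<Rightarrow> int \<Rightarrow> int" where
  "half_antipodal1 n i = (if odd i then i else (i + int n div 2) mod int n)"

definition half_antipodal2 :: "nat \<Rightarrow> int \<Rightarrow> int" where
  "half_antipodal2 n i = (if odd i then (i + int n div 2) mod int n else i)"

end

theory Submission imports Defs begin

lemma mod_sub_dvd: "(c::int) dvd b \<Longrightarrow> (a - b) mod c = a mod c"
proof -
  assume "c dvd b" then obtain k where "b = c * k" by (auto elim!: dvdE)
  then show ?thesis by (simp add: mod_diff_right_eq[of a "c*k" c, symmetric])
qed
lemma mod_add_dvd: "(c::int) dvd b \<Longrightarrow> (a + b) mod c = a mod c"
proof -
  assume "c dvd b" then obtain k where "b = c * k" by (auto elim!: dvdE)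
  then show ?thesis by simp
qed


lemma mod_parity: "even (n::int) \<Longrightarrow> even (z mod n) = even z"
  by (metis dvd_mod_iff)

lemma qinv_eq:
  assumes "n > 0" "x \<in> dihedral_carrier n" "y \<in> dihedral_carrier n"
  shows "qinv (dihedral_carrier n) (dihedral_op n) x y = (2*y - x) mod int n"
  unfolding qinv_def
proof (rule the_equality)
  show "(2*y - x) mod int n \<in> dihedral_carrier n \<and> dihedral_op n ((2*y - x) mod int n) y = x"
    using assms by (auto simp: dihedral_carrier_def dihedral_op_def mod_diff_right_eq)
next
  fix z assume "z \<in> dihedral_carrier n \<and> dihedral_op n z y = x"
  then have z: "0 \<le> z" "z < int n" "(2*y - z) mod int n = x"
    by (auto simp: dihedral_carrier_def dihedral_op_def)
  have "(2*y - x) mod int n = (2*y - (2*y - z) mod int n) mod int n" using z by simp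
  also have "\<dots> = z mod int n" by (simp add: mod_diff_right_eq)
  also have "\<dots> = z" using z by simp
  finally show "z = (2*y - x) mod int n" by simp
qed

lemma good_shift:
  assumes n: "n > 0"
    and A: "\<And>x. int n dvd 2 * s x"
    and B: "\<And>x y. even x = even y \<Longrightarrow> s x = s y"
    and C: "\<And>x. even (s x) \<or> (\<forall>y. s y = s x)"
    and D: "even n \<or> (\<forall>x. s x = 0)"
    and R: "\<forall>x\<in>dihedral_carrier n. \<rho> x = (x + s x) mod int n"
  shows "good_involution (dihedral_carrier n) (dihedral_op n) \<rho>"
proof -
  let ?X = "dihedral_carrier n" and ?N = "int n"
  have mem: "\<And>z. z mod ?N \<in> ?X" using n by (simp add: dihedral_carrier_def)
  have sp: "\<And>x z. s ((x + z) mod ?N) = s (x + z)"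
  proof -
    fix x z
    show "s ((x + z) mod ?N) = s (x + z)"
    proof (cases "even n")
      case True
      then have "even ?N" by simp
      then show ?thesis by (intro B) (simp add: mod_parity)
    next
      case False then show ?thesis using D by auto
    qed
  qed
  have sx: "\<And>x. s (x + s x) = s x"
  proof -
    fix x show "s (x + s x) = s x" using B[of "x + s x" x] C[of x] by auto
  qed
  have twice: "\<And>x z. (z + 2 * s x) mod ?N = z mod ?N"
  proof -
    fix x z
    obtain k where "2 * s x = ?N * k" using A[of x] by (auto elim!: dvdE)
    then show "(z + 2 * s x) mod ?N = z mod ?N" by simp
  qed
  show ?thesis unfolding good_involution_def
  proof (intro conjI ballI)
    fix x assume x: "x \<in> ?X"
    show "\<rho> x \<in> ?X" using R x mem by simp
    have "\<rho> (\<rho> x) = ((x + s x) mod ?N + s ((x + s x) mod ?N)) mod ?N"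
      using R x mem by simp
    also have "\<dots> = (x + s x + s x) mod ?N" using sp[of x "s x"] sx[of x] by (simp add: mod_add_left_eq)
    also have "\<dots> = (x + 2 * s x) mod ?N" by (simp add: algebra_simps)
    also have "\<dots> = x" using twice[of x x] x by (simp add: dihedral_carrier_def)
    finally show "\<rho> (\<rho> x) = x" .
  next
    fix x y assume x: "x \<in> ?X" and y: "y \<in> ?X"
    have "\<rho> (dihedral_op n x y) = ((2*y - x) mod ?N + s ((2*y - x) mod ?N)) mod ?N"
      using R mem by (simp add: dihedral_op_def)
    also have "\<dots> = (2*y - x + s x) mod ?N"
    proof -
      have "s ((2*y - x) mod ?N) = s x"
      proof (cases "even n")
        case True
        then have "even ?N" by simp
        then show ?thesis by (intro B) (simp add: mod_parity)
      next
        case False then show ?thesis using D by auto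
      qed
      then show ?thesis by (simp add: mod_add_left_eq)
    qed
    also have "\<dots> = (2*y - x - s x + 2 * s x) mod ?N" by (simp add: algebra_simps)
    also have "\<dots> = (2*y - x - s x) mod ?N" by (rule twice)
    also have "\<dots> = (2*y - (x + s x) mod ?N) mod ?N" by (simp add: mod_diff_right_eq algebra_simps)
    also have "\<dots> = dihedral_op n (\<rho> x) y" using R x by (simp add: dihedral_op_def)
    finally show "\<rho> (dihedral_op n x y) = dihedral_op n (\<rho> x) y" .
  next
    fix x y assume x: "x \<in> ?X" and y: "y \<in> ?X"
    have "dihedral_op n x (\<rho> y) = (2 * ((y + s y) mod ?N) - x) mod ?N"
      using R y by (simp add: dihedral_op_def)
    also have "\<dots> = (2 * (y + s y) - x) mod ?N"
    proof -
      have "(2 * ((y + s y) mod ?N)) mod ?N = (2*(y+s y)) mod ?N" by (rule mod_mult_right_eq)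
      then show ?thesis by (metis mod_diff_left_eq)
    qed
    also have "\<dots> = (2*y - x + 2 * s y) mod ?N" by (simp add: algebra_simps)
    also have "\<dots> = (2*y - x) mod ?N" by (rule twice)
    finally show "dihedral_op n x (\<rho> y) = qinv ?X (dihedral_op n) x y"
      using qinv_eq[OF n x y] by simp
  qed
qed



lemma fw_dvd:
  assumes n: "n > 0" and g: "good_involution (dihedral_carrier n) (dihedral_op n) \<rho>"
    and y: "y \<in> dihedral_carrier n"
  shows "int n dvd 2 * (\<rho> y - y)"
proof -
  have z: "0 \<in> dihedral_carrier n" using n by (simp add: dihedral_carrier_def)
  have "dihedral_op n 0 (\<rho> y) = qinv (dihedral_carrier n) (dihedral_op n) 0 y"
    using g z y unfolding good_involution_def by blast
  then have "(2 * \<rho> y) mod int n = (2 * y) mod int n"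
    using qinv_eq[OF n z y] by (simp add: dihedral_op_def)
  then have "int n dvd 2 * \<rho> y - 2 * y" by (simp only: mod_eq_dvd_iff)
  then show ?thesis by (simp add: right_diff_distrib)
qed

lemma fw_op:
  assumes g: "good_involution (dihedral_carrier n) (dihedral_op n) \<rho>"
    and x: "x \<in> dihedral_carrier n" and y: "y \<in> dihedral_carrier n"
  shows "\<rho> ((2*y - x) mod int n) = (2*y - \<rho> x) mod int n"
proof -
  have "\<forall>x\<in>dihedral_carrier n. \<forall>y\<in>dihedral_carrier n. \<rho> (dihedral_op n x y) = dihedral_op n (\<rho> x) y"
    using g unfolding good_involution_def by (elim conjE)
  then show ?thesis using x y unfolding dihedral_op_def by blast
qed

lemma fw_odd:
  assumes n: "n > 0" "odd n" and g: "good_involution (dihedral_carrier n) (dihedral_op n) \<rho>"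
    and z: "z \<in> dihedral_carrier n"
  shows "\<rho> z = z"
proof -
  let ?N = "int n"
  have z0: "0 \<in> dihedral_carrier n" using n by (simp add: dihedral_carrier_def)
  have d0: "?N dvd 2 * \<rho> 0" using fw_dvd[OF n(1) g z0] by simp
  have "coprime ?N 2" using n(2) by simp
  then have d: "?N dvd \<rho> 0" using d0 coprime_dvd_mult_right_iff by blast
  define k where "k = (?N + 1) div 2"
  define y where "y = (z * k) mod ?N"
  have y: "y \<in> dihedral_carrier n" using n by (simp add: y_def dihedral_carrier_def)
  have e: "2 * k = ?N + 1" using n(2) unfolding k_def by presburger
  have "(2 * y) mod ?N = (2 * (z * k)) mod ?N"
    unfolding y_def by (rule mod_mult_right_eq)
  also have "2 * (z * k) = z * (2 * k)" by simp
  also have "\<dots> = z + ?N * z" using e by (simp add: algebra_simps)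
  also have "(z + ?N * z) mod ?N = z mod ?N" by (rule mod_add_dvd) simp
  also have "\<dots> = z" using z by (simp add: dihedral_carrier_def)
  finally have yz: "(2 * y) mod ?N = z" .
  have "\<rho> z = (2*y - \<rho> 0) mod ?N" using fw_op[OF g z0 y] yz by simp
  also have "\<dots> = (2*y) mod ?N" using d by (rule mod_sub_dvd)
  finally show ?thesis using yz by simp
qed

lemma fw_even:
  assumes n: "n > 0" "even n" and g: "good_involution (dihedral_carrier n) (dihedral_op n) \<rho>"
    and z: "z \<in> dihedral_carrier n"
  shows "\<rho> z = (z + (if even z then \<rho> 0 else \<rho> 1 - 1)) mod int n"
proof -
  let ?N = "int n"
  have N2: "?N \<ge> 2" using n by presburger
  have z0: "0 \<in> dihedral_carrier n" and z1: "1 \<in> dihedral_carrier n"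
    using N2 by (auto simp: dihedral_carrier_def)
  have zz: "0 \<le> z" "z < ?N" using z by (auto simp: dihedral_carrier_def)
  show ?thesis
  proof (cases "even z")
    case True
    define y where "y = z div 2"
    have y: "y \<in> dihedral_carrier n" using zz by (auto simp: y_def dihedral_carrier_def)
    have yz: "2*y = z" using True by (simp add: y_def)
    have d: "?N dvd 2 * \<rho> 0" using fw_dvd[OF n(1) g z0] by simp
    have "\<rho> z = (2*y - \<rho> 0) mod ?N" using fw_op[OF g z0 y] yz zz by simp
    also have "\<dots> = (z - \<rho> 0 + 2 * \<rho> 0) mod ?N" using mod_add_dvd[OF d, of "z - \<rho> 0"] yz by (simp only:)
    also have "\<dots> = (z + \<rho> 0) mod ?N" by (simp add: add.commute)
    finally show ?thesis using True by simp
  next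
    case False
    define y where "y = (z + 1) div 2"
    have y: "y \<in> dihedral_carrier n" using zz by (auto simp: y_def dihedral_carrier_def)
    have yz: "2*y - 1 = z" using False unfolding y_def by presburger
    have d: "?N dvd 2 * (\<rho> 1 - 1)" using fw_dvd[OF n(1) g z1] by simp
    have "\<rho> z = (2*y - \<rho> 1) mod ?N" using fw_op[OF g z1 y] yz zz by simp
    also have "2*y - \<rho> 1 = z - (\<rho> 1 - 1)" using yz by simp
    also have "(z - (\<rho> 1 - 1)) mod ?N = (z - (\<rho> 1 - 1) + 2 * (\<rho> 1 - 1)) mod ?N"
      using mod_add_dvd[OF d, of "z - (\<rho> 1 - 1)"] by (simp only:)
    also have "z - (\<rho> 1 - 1) + 2 * (\<rho> 1 - 1) = z + (\<rho> 1 - 1)" by (simp add: algebra_simps)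
    finally show ?thesis using False by simp
  qed
qed



lemma mod_mod_half:
  assumes N: "N = 2 * (m::int)" "m > 0" and d: "N dvd 2 * c"
  shows "c mod N = 0 \<or> c mod N = m"
proof -
  define r where "r = c mod N"
  have r: "0 \<le> r" "r < N" using N by (auto simp: r_def)
  have "2 * c mod N = 0" using d by simp
  then have "(2 * r) mod N = 0" unfolding r_def by (simp add: mod_mult_right_eq)
  then have "2 * r = 0 \<or> 2 * r = N"
  proof (cases "2 * r < N")
    case True
    then have "(2*r) mod N = 2 * r" using r by (intro mod_pos_pos_trivial) auto
    then show ?thesis using \<open>(2 * r) mod N = 0\<close> by simp
  next
    case False
    then have "(2*r - N) mod N = 2 * r - N" using r by (intro mod_pos_pos_trivial) auto
    moreover have "(2*r - N) mod N = (2*r) mod N" by (simp add: mod_sub_dvd)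
    ultimately show ?thesis using \<open>(2 * r) mod N = 0\<close> by simp
  qed
  then show ?thesis using N unfolding r_def by auto
qed

lemma classify:
  assumes n: "n = 2 * m" "m > 0" and g: "good_involution (dihedral_carrier n) (dihedral_op n) \<rho>"
  shows "\<exists>a b. (a = 0 \<or> a = int m) \<and> (b = 0 \<or> b = int m) \<and>
     (\<forall>x\<in>dihedral_carrier n. \<rho> x = (x + (if even x then a else b)) mod int n)"
proof -
  have n0: "n > 0" "even n" using n by auto
  have N2: "int n \<ge> 2" using n by simp
  have z0: "0 \<in> dihedral_carrier n" and z1: "1 \<in> dihedral_carrier n"
    using N2 by (auto simp: dihedral_carrier_def)
  have d0: "int n dvd 2 * \<rho> 0" using fw_dvd[OF n0(1) g z0] by simp
  have d1: "int n dvd 2 * (\<rho> 1 - 1)" using fw_dvd[OF n0(1) g z1] by simp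
  have Nm: "int n = 2 * int m" using n by simp
  define a where "a = \<rho> 0 mod int n"
  define b where "b = (\<rho> 1 - 1) mod int n"
  have a: "a = 0 \<or> a = int m" unfolding a_def using mod_mod_half[OF Nm _ d0] n by simp
  have b: "b = 0 \<or> b = int m" unfolding b_def using mod_mod_half[OF Nm _ d1] n by simp
  have "\<forall>x\<in>dihedral_carrier n. \<rho> x = (x + (if even x then a else b)) mod int n"
  proof
    fix x assume x: "x \<in> dihedral_carrier n"
    show "\<rho> x = (x + (if even x then a else b)) mod int n"
      using fw_even[OF n0 g x] unfolding a_def b_def by (simp add: mod_add_right_eq)
  qed
  then show ?thesis using a b by blast
qed

lemma good_id:
  assumes "n > 0" "\<forall>x\<in>dihedral_carrier n. \<rho> x = x"
  shows "good_involution (dihedral_carrier n) (dihedral_op n) \<rho>"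
  by (rule good_shift[where s = "\<lambda>_. 0"]) (use assms in \<open>auto simp: dihedral_carrier_def\<close>)

lemma good_ant:
  assumes "n = 2 * m" "m > 0" "\<forall>x\<in>dihedral_carrier n. \<rho> x = antipodal n x"
  shows "good_involution (dihedral_carrier n) (dihedral_op n) \<rho>"
  by (rule good_shift[where s = "\<lambda>_. int m"]) (use assms in \<open>auto simp: antipodal_def\<close>)

lemma good_h1:
  assumes "n = 2 * m" "m > 0" "even m" "\<forall>x\<in>dihedral_carrier n. \<rho> x = half_antipodal1 n x"
  shows "good_involution (dihedral_carrier n) (dihedral_op n) \<rho>"
  by (rule good_shift[where s = "\<lambda>x. if odd x then 0 else int m"])
     (use assms in \<open>auto simp: half_antipodal1_def dihedral_carrier_def\<close>)

lemma good_h2: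
  assumes "n = 2 * m" "m > 0" "even m" "\<forall>x\<in>dihedral_carrier n. \<rho> x = half_antipodal2 n x"
  shows "good_involution (dihedral_carrier n) (dihedral_op n) \<rho>"
  by (rule good_shift[where s = "\<lambda>x. if odd x then int m else 0"])
     (use assms in \<open>auto simp: half_antipodal2_def dihedral_carrier_def\<close>)



lemma cases4:
  assumes n: "n = 2 * m" "m > 0" and g: "good_involution (dihedral_carrier n) (dihedral_op n) \<rho>"
  shows "(\<forall>x\<in>dihedral_carrier n. \<rho> x = x) \<or>
         (\<forall>x\<in>dihedral_carrier n. \<rho> x = antipodal n x) \<or>
         (\<forall>x\<in>dihedral_carrier n. \<rho> x = half_antipodal1 n x) \<or>
         (\<forall>x\<in>dihedral_carrier n. \<rho> x = half_antipodal2 n x)"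
proof -
  obtain a b where a: "a = 0 \<or> a = int m" and b: "b = 0 \<or> b = int m"
    and R: "\<forall>x\<in>dihedral_carrier n. \<rho> x = (x + (if even x then a else b)) mod int n"
    using classify[OF n g] by blast
  have md: "int n div 2 = int m" using n by simp
  have tr: "\<And>x. x \<in> dihedral_carrier n \<Longrightarrow> x mod int n = x" by (simp add: dihedral_carrier_def)
  from a b show ?thesis
  proof (elim disjE)
    assume "a = 0" "b = 0" then show ?thesis using R tr by auto
  next
    assume "a = int m" "b = int m" then show ?thesis using R md by (auto simp: antipodal_def)
  next
    assume "a = int m" "b = 0" then show ?thesis using R md tr by (auto simp: half_antipodal1_def)
  next
    assume "a = 0" "b = int m" then show ?thesis using R md tr by (auto simp: half_antipodal2_def)
  qed
qed

lemma not_h1: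
  assumes n: "n = 2 * m" "odd m" and g: "good_involution (dihedral_carrier n) (dihedral_op n) \<rho>"
    and R: "\<forall>x\<in>dihedral_carrier n. \<rho> x = half_antipodal1 n x"
  shows False
proof -
  have m0: "m > 0" using n by (cases m) auto
  have z0: "0 \<in> dihedral_carrier n" and zm: "int m \<in> dihedral_carrier n"
    using n m0 by (auto simp: dihedral_carrier_def)
  have "\<rho> 0 = int m" using R z0 n m0 by (simp add: half_antipodal1_def)
  moreover have "\<rho> (int m) = int m" using R zm n by (simp add: half_antipodal1_def)
  moreover have "\<rho> (\<rho> 0) = 0" using g z0 unfolding good_involution_def by blast
  ultimately show False using m0 by simp
qed

lemma not_h2:
  assumes n: "n = 2 * m" "odd m" and g: "good_involution (dihedral_carrier n) (dihedral_op n) \<rho>"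
    and R: "\<forall>x\<in>dihedral_carrier n. \<rho> x = half_antipodal2 n x"
  shows False
proof -
  have m0: "m > 0" using n by (cases m) auto
  have z1: "1 \<in> dihedral_carrier n"
    using n m0 by (auto simp: dihedral_carrier_def)
  define v where "v = (1 + int m) mod int n"
  have ev: "even v" unfolding v_def using n by (simp add: mod_parity)
  have vX: "v \<in> dihedral_carrier n" unfolding v_def using n m0 by (simp add: dihedral_carrier_def)
  have "\<rho> 1 = v" using R z1 n by (simp add: half_antipodal2_def v_def add.commute)
  moreover have "\<rho> v = v" using R vX ev by (simp add: half_antipodal2_def)
  moreover have "\<rho> (\<rho> 1) = 1" using g z1 unfolding good_involution_def by blast
  ultimately show False using ev by simp
qed

theorem theorem3p2:
  fixes n :: nat
  assumes "n \<ge> 1"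
  shows
   "(odd n \<longrightarrow>
       (\<forall>\<rho>. good_involution (dihedral_carrier n) (dihedral_op n) \<rho> \<longleftrightarrow>
              (\<forall>x\<in>dihedral_carrier n. \<rho> x = x))) \<and>
    (\<forall>m. n = 2 * m \<and> odd m \<longrightarrow>
       (\<forall>\<rho>. good_involution (dihedral_carrier n) (dihedral_op n) \<rho> \<longrightarrow>
              (\<forall>x\<in>dihedral_carrier n. \<rho> x = x) \<or>
              (\<forall>x\<in>dihedral_carrier n. \<rho> x = antipodal n x))) \<and>
    (\<forall>m. n = 2 * m \<and> even m \<longrightarrow>
       (\<forall>\<rho>. good_involution (dihedral_carrier n) (dihedral_op n) \<rho> \<longleftrightarrow>
              (\<forall>x\<in>dihedral_carrier n. \<rho> x = x) \<or>
              (\<forall>x\<in>dihedral_carrier n. \<rho> x = antipodal n x) \<or>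
              (\<forall>x\<in>dihedral_carrier n. \<rho> x = half_antipodal1 n x) \<or>
              (\<forall>x\<in>dihedral_carrier n. \<rho> x = half_antipodal2 n x)) \<and>
       card ((\<lambda>\<rho>. \<lambda>x. if x \<in> dihedral_carrier n then \<rho> x else 0) `
             {\<rho>. good_involution (dihedral_carrier n) (dihedral_op n) \<rho>}) = 4)"
proof (intro conjI allI impI)
  have n0: "n > 0" using assms by simp
  let ?X = "dihedral_carrier n"
  let ?G = "good_involution ?X (dihedral_op n)"
  {
    assume o: "odd n"
    fix \<rho>
    show "?G \<rho> \<longleftrightarrow> (\<forall>x\<in>?X. \<rho> x = x)"
      using fw_odd[OF n0 o] good_id[OF n0] by blast
  }
  {
    fix m \<rho> assume nm: "n = 2 * m \<and> odd m" and g: "?G \<rho>"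
    have m0: "m > 0" using nm by (cases m) auto
    show "(\<forall>x\<in>?X. \<rho> x = x) \<or> (\<forall>x\<in>?X. \<rho> x = antipodal n x)"
      using cases4[OF _ m0 g] not_h1[OF _ _ g] not_h2[OF _ _ g] nm by blast
  }
  {
    fix m \<rho> assume nm: "n = 2 * m \<and> even m"
    have m0: "m > 0" using nm n0 by (cases m) auto
    show "?G \<rho> \<longleftrightarrow> (\<forall>x\<in>?X. \<rho> x = x) \<or> (\<forall>x\<in>?X. \<rho> x = antipodal n x) \<or>
              (\<forall>x\<in>?X. \<rho> x = half_antipodal1 n x) \<or> (\<forall>x\<in>?X. \<rho> x = half_antipodal2 n x)"
      using cases4[OF _ m0, of n \<rho>] good_id[OF n0, of \<rho>] good_ant[OF _ m0, of n \<rho>]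
        good_h1[OF _ m0, of n \<rho>] good_h2[OF _ m0, of n \<rho>] nm by blast
  }
  {
    fix m assume nm: "n = 2 * m \<and> even m"
    have m0: "m > 0" using nm n0 by (cases m) auto
    have m2: "m \<ge> 2" using nm m0 by presburger
    define r where "r = (\<lambda>(\<rho>::int\<Rightarrow>int). \<lambda>x. if x \<in> ?X then \<rho> x else 0)"
    have rr: "\<And>\<rho> f. \<forall>x\<in>?X. \<rho> x = f x \<Longrightarrow> r \<rho> = r f" unfolding r_def by auto
    have img: "r ` {\<rho>. ?G \<rho>} = {r (\<lambda>x. x), r (antipodal n), r (half_antipodal1 n), r (half_antipodal2 n)}"
    proof
      show "r ` {\<rho>. ?G \<rho>} \<subseteq> {r (\<lambda>x. x), r (antipodal n), r (half_antipodal1 n), r (half_antipodal2 n)}"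
      proof
        fix u assume "u \<in> r ` {\<rho>. ?G \<rho>}"
        then obtain \<rho> where g: "?G \<rho>" and u: "u = r \<rho>" by blast
        show "u \<in> {r (\<lambda>x. x), r (antipodal n), r (half_antipodal1 n), r (half_antipodal2 n)}"
          using cases4[OF _ m0 g] nm u rr[of \<rho> "\<lambda>x. x"] rr[of \<rho> "antipodal n"]
            rr[of \<rho> "half_antipodal1 n"] rr[of \<rho> "half_antipodal2 n"] by auto
      qed
    next
      have "?G (\<lambda>x. x)" using good_id[OF n0] by simp
      moreover have "?G (antipodal n)" using good_ant[OF _ m0] nm by simp
      moreover have "?G (half_antipodal1 n)" using good_h1[OF _ m0] nm by simp
      moreover have "?G (half_antipodal2 n)" using good_h2[OF _ m0] nm by simp
      ultimately show "{r (\<lambda>x. x), r (antipodal n), r (half_antipodal1 n), r (half_antipodal2 n)} \<subseteq> r ` {\<rho>. ?G \<rho>}"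
        by blast
    qed
    have X0: "0 \<in> ?X" and X1: "1 \<in> ?X" using m0 nm by (auto simp: dihedral_carrier_def)
    have md: "int n div 2 = int m" using nm by simp
    have m1: "(1 + int m) mod int n = 1 + int m" using nm m2 by (intro mod_pos_pos_trivial) auto
    have mm: "int m mod int n = int m" using nm m2 by (intro mod_pos_pos_trivial) auto
    have v0: "r (\<lambda>x. x) 0 = 0" "r (antipodal n) 0 = int m" "r (half_antipodal1 n) 0 = int m"
      "r (half_antipodal2 n) 0 = 0"
      using X0 md mm by (auto simp: r_def antipodal_def half_antipodal1_def half_antipodal2_def)
    have v1: "r (\<lambda>x. x) 1 = 1" "r (antipodal n) 1 = 1 + int m" "r (half_antipodal1 n) 1 = 1"
      "r (half_antipodal2 n) 1 = 1 + int m"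
      using X1 md m1 by (auto simp: r_def antipodal_def half_antipodal1_def half_antipodal2_def add.commute)
    have d: "r (\<lambda>x. x) \<noteq> r (antipodal n)" "r (\<lambda>x. x) \<noteq> r (half_antipodal1 n)"
      "r (\<lambda>x. x) \<noteq> r (half_antipodal2 n)" "r (antipodal n) \<noteq> r (half_antipodal1 n)"
      "r (antipodal n) \<noteq> r (half_antipodal2 n)" "r (half_antipodal1 n) \<noteq> r (half_antipodal2 n)"
      using v0 v1 m0 by (metis add_cancel_left_right of_nat_eq_0_iff not_gr0)+
    show "card ((\<lambda>\<rho>. \<lambda>x. if x \<in> ?X then \<rho> x else 0) ` {\<rho>. ?G \<rho>}) = 4"
      using img d unfolding r_def[symmetric] by simp
  }
qed


end
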